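(* Let $D=(V,A,w)$ be a weighted digraph and let $M$ be a matching in $D$ (a set of arcs no two of which share an endpoint). Then $\mathrm{mac}(D)\ge\frac{w(D)}{4}+\frac{w(M)}{4}$.
   Context: A weighted digraph $D=(V,A,w)$ is a digraph without loops or parallel arcs (opposite arcs allowed) with weights $w:A\to\mathbb{R}_{\ge0}$; $w(\cdot)$ of an arc set is its total weight. For a partition $(X,Y)$ of $V$, $w(X,Y)$ is the total weight of arcs from $X$ to $Y$, and $\mathrm{mac}(D)=\max_{(X,Y)}w(X,Y)$. *)

theory Defs
  imports Complex_Main
begin

text \<open>A weighted digraph: finite vertex set V, arc set A of ordered pairs (so no parallel
arcs; opposite arcs allowed), no loops, nonnegative real weights on arcs.\<close>

definition weighted_digraph :: "'a set \<Rightarrow> ('a \<times> 'a) set \<Rightarrow> ('a \<times> 'a \<Rightarrow> real) \<Rightarrow> bool" where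
  "weighted_digraph V A w \<longleftrightarrow> finite V \<and> A \<subseteq> V \<times> V \<and> (\<forall>v. (v, v) \<notin> A)
     \<and> (\<forall>a\<in>A. w a \<ge> 0)"

definition wt :: "('a \<times> 'a \<Rightarrow> real) \<Rightarrow> ('a \<times> 'a) set \<Rightarrow> real" where
  "wt w B = (\<Sum>a\<in>B. w a)"

definition cut_weight :: "('a \<times> 'a) set \<Rightarrow> ('a \<times> 'a \<Rightarrow> real) \<Rightarrow> 'a set \<Rightarrow> 'a set \<Rightarrow> real" where
  "cut_weight A w X Y = wt w {(u, v) \<in> A. u \<in> X \<and> v \<in> Y}"

definition mac :: "'a set \<Rightarrow> ('a \<times> 'a) set \<Rightarrow> ('a \<times> 'a \<Rightarrow> real) \<Rightarrow> real" where
  "mac V A w = Max ((\<lambda>X. cut_weight A w X (V - X)) ` Pow V)"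

definition is_matching :: "('a \<times> 'a) set \<Rightarrow> ('a \<times> 'a) set \<Rightarrow> bool" where
  "is_matching A M \<longleftrightarrow> M \<subseteq> A \<and>
     (\<forall>a\<in>M. \<forall>b\<in>M. a \<noteq> b \<longrightarrow> {fst a, snd a} \<inter> {fst b, snd b} = {})"

end

theory Submission
  imports Defs
begin

definition tg :: "'a \<Rightarrow> 'a set \<Rightarrow> 'a set" where
  "tg a Z = (if a \<in> Z then Z - {a} else insert a Z)"

lemma tg_tg: "tg a (tg a Z) = Z"
  unfolding tg_def by auto

lemma tg_pow': "a \<in> W \<Longrightarrow> Z \<subseteq> W \<Longrightarrow> x \<in> tg a Z \<Longrightarrow> x \<in> W"
  unfolding tg_def by (auto split: if_splits)

lemma tg_pow: "a \<in> W \<Longrightarrow> Z \<subseteq> W \<Longrightarrow> tg a Z \<subseteq> W"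
  unfolding tg_def by auto

lemma card_flip:
  assumes "a \<in> W"
  shows "card {Z\<in>Pow W. P (tg a Z)} = card {Z\<in>Pow W. P Z}"
proof (rule bij_betw_same_card)
  show "bij_betw (tg a) {Z\<in>Pow W. P (tg a Z)} {Z\<in>Pow W. P Z}"
    by (rule bij_betw_byWitness[where f'="tg a"]) (auto simp: tg_tg dest: tg_pow'[OF assms])
qed

lemma tg_mem1: "(a \<in> tg a Z) = (a \<notin> Z)" unfolding tg_def by auto
lemma tg_mem2: "b \<noteq> a \<Longrightarrow> (b \<in> tg a Z) = (b \<in> Z)" unfolding tg_def by auto

lemma count1:
  assumes "finite W" "a \<in> W"
  shows "2 * card {Z\<in>Pow W. (a \<in> Z) = \<alpha>} = 2 ^ card W"
proof -
  have e: "card {Z\<in>Pow W. (a \<in> Z) = (\<not>\<alpha>)} = card {Z\<in>Pow W. (a \<in> Z) = \<alpha>}"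
  proof -
    have "{Z\<in>Pow W. (a \<in> tg a Z) = \<alpha>} = {Z\<in>Pow W. (a \<in> Z) = (\<not>\<alpha>)}" by (auto simp: tg_mem1)
    then show ?thesis using card_flip[OF assms(2), where P="\<lambda>Z. (a \<in> Z) = \<alpha>"] by simp
  qed
  have u: "Pow W = {Z\<in>Pow W. (a \<in> Z) = (\<not>\<alpha>)} \<union> {Z\<in>Pow W. (a \<in> Z) = \<alpha>}" by auto
  have "card (Pow W) = card {Z\<in>Pow W. (a \<in> Z) = (\<not>\<alpha>)} + card {Z\<in>Pow W. (a \<in> Z) = \<alpha>}"
    by (subst u, rule card_Un_disjoint) (auto simp: assms)
  then show ?thesis using e card_Pow[of W] assms(1) by simp
qed

lemma count2:
  assumes "finite W" "a \<in> W" "b \<in> W" "a \<noteq> b"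
  shows "4 * card {Z\<in>Pow W. (a \<in> Z) = \<alpha> \<and> (b \<in> Z) = \<beta>} = 2 ^ card W"
proof -
  have e: "card {Z\<in>Pow W. (a \<in> Z) = (\<not>\<alpha>) \<and> (b \<in> Z) = \<beta>} = card {Z\<in>Pow W. (a \<in> Z) = \<alpha> \<and> (b \<in> Z) = \<beta>}"
  proof -
    have "{Z\<in>Pow W. (a \<in> tg a Z) = \<alpha> \<and> (b \<in> tg a Z) = \<beta>} = {Z\<in>Pow W. (a \<in> Z) = (\<not>\<alpha>) \<and> (b \<in> Z) = \<beta>}"
      using assms(4) by (auto simp: tg_mem1 tg_mem2)
    then show ?thesis using card_flip[OF assms(2), where P="\<lambda>Z. (a \<in> Z) = \<alpha> \<and> (b \<in> Z) = \<beta>"] by simp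
  qed
  have u: "{Z\<in>Pow W. (b \<in> Z) = \<beta>} = {Z\<in>Pow W. (a \<in> Z) = (\<not>\<alpha>) \<and> (b \<in> Z) = \<beta>} \<union> {Z\<in>Pow W. (a \<in> Z) = \<alpha> \<and> (b \<in> Z) = \<beta>}" by auto
  have "card {Z\<in>Pow W. (b \<in> Z) = \<beta>} = card {Z\<in>Pow W. (a \<in> Z) = (\<not>\<alpha>) \<and> (b \<in> Z) = \<beta>} + card {Z\<in>Pow W. (a \<in> Z) = \<alpha> \<and> (b \<in> Z) = \<beta>}"
    by (subst u, rule card_Un_disjoint) (auto simp: assms)
  then show ?thesis using e count1[OF assms(1,3), of \<beta>] by simp
qed

lemma count_ge:
  assumes "finite W" "k1 \<in> W" "k2 \<in> W" "k1 = k2 \<longrightarrow> \<alpha> = \<beta>"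
  shows "4 * real (card {Z\<in>Pow W. (k1 \<in> Z) = \<alpha> \<and> (k2 \<in> Z) = \<beta>}) \<ge> 2 ^ card W"
    and "k1 = k2 \<Longrightarrow> 2 * real (card {Z\<in>Pow W. (k1 \<in> Z) = \<alpha> \<and> (k2 \<in> Z) = \<beta>}) = 2 ^ card W"
proof -
  have P2: "2 * real (card {Z\<in>Pow W. (k1 \<in> Z) = \<alpha> \<and> (k2 \<in> Z) = \<beta>}) = 2 ^ card W" if k: "k1 = k2"
  proof -
    have "{Z\<in>Pow W. (k1 \<in> Z) = \<alpha> \<and> (k2 \<in> Z) = \<beta>} = {Z\<in>Pow W. (k1 \<in> Z) = \<alpha>}" using k assms(4) by auto
    then have h: "2 * card {Z\<in>Pow W. (k1 \<in> Z) = \<alpha> \<and> (k2 \<in> Z) = \<beta>} = 2 ^ card W"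
      using count1[OF assms(1,2), of \<alpha>] by simp
    show ?thesis using arg_cong[OF h, of real] by simp
  qed
  then show "k1 = k2 \<Longrightarrow> 2 * real (card {Z\<in>Pow W. (k1 \<in> Z) = \<alpha> \<and> (k2 \<in> Z) = \<beta>}) = 2 ^ card W" .
  show "4 * real (card {Z\<in>Pow W. (k1 \<in> Z) = \<alpha> \<and> (k2 \<in> Z) = \<beta>}) \<ge> 2 ^ card W"
  proof (cases "k1 = k2")
    case True
    then show ?thesis using P2[OF True] by simp
  next
    case False
    have h: "4 * card {Z\<in>Pow W. (k1 \<in> Z) = \<alpha> \<and> (k2 \<in> Z) = \<beta>} = 2 ^ card W"
      using count2[OF assms(1,2,3) False] .
    show ?thesis using arg_cong[OF h, of real] by simp
  qed
qed

lemma cw_sum: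
  assumes "finite A"
  shows "cut_weight A w X Y = (\<Sum>a\<in>A. if fst a \<in> X \<and> snd a \<in> Y then w a else 0)"
proof -
  have "{(u, v) \<in> A. u \<in> X \<and> v \<in> Y} = {a\<in>A. fst a \<in> X \<and> snd a \<in> Y}" by auto
  then show ?thesis unfolding cut_weight_def wt_def using sum.inter_filter[OF assms] by simp
qed

theorem mainTheorem5:
  fixes V :: "'a set" and A M :: "('a \<times> 'a) set" and w :: "'a \<times> 'a \<Rightarrow> real"
  assumes "weighted_digraph V A w"
    and "is_matching A M"
  shows "mac V A w \<ge> wt w A / 4 + wt w M / 4"
proof -
  have finV: "finite V" and AV: "A \<subseteq> V \<times> V" and nl: "\<And>v. (v, v) \<notin> A"
    and wp: "\<And>a. a \<in> A \<Longrightarrow> w a \<ge> 0"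
    using assms(1) unfolding weighted_digraph_def by auto
  have MA: "M \<subseteq> A" and mt: "\<And>a b. a \<in> M \<Longrightarrow> b \<in> M \<Longrightarrow> a \<noteq> b \<Longrightarrow> {fst a, snd a} \<inter> {fst b, snd b} = {}"
    using assms(2) unfolding is_matching_def by auto
  have finA: "finite A" using AV finV by (meson finite_SigmaI finite_subset)
  define H where "H = snd ` M"
  define q where "q v = (SOME u. (u, v) \<in> M)" for v
  have qM: "(q v, v) \<in> M" if "v \<in> H" for v
  proof -
    from that obtain u where "(u, v) \<in> M" unfolding H_def by force
    then show ?thesis unfolding q_def by (rule someI)
  qed
  have qV: "q v \<in> V" "v \<in> V" if "v \<in> H" for v using qM[OF that] MA AV by auto
  have tailnH: "u \<notin> H" if uv: "(u, v) \<in> M" for u v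
  proof
    assume "u \<in> H"
    then obtain b where b1: "b \<in> M" and b2: "snd b = u" unfolding H_def by blast
    have uvA: "(u, v) \<in> A" using uv MA by blast
    have "u \<noteq> v" using uvA nl by blast
    have ne: "b \<noteq> (u, v)"
    proof
      assume "b = (u, v)"
      with b2 have "v = u" by simp
      with \<open>u \<noteq> v\<close> show False by simp
    qed
    have "{fst b, snd b} \<inter> {fst (u, v), snd (u, v)} = {}" by (rule mt[OF b1 uv ne])
    then show False using b2 by simp
  qed
  have qH: "q v \<notin> H" if "v \<in> H" for v using tailnH[OF qM[OF that]] .
  have qeq: "q v = u" if "(u, v) \<in> M" for u v
  proof (rule ccontr)
    assume "q v \<noteq> u"
    have "v \<in> H" using that unfolding H_def by force
    then have "(q v, v) \<in> M" by (rule qM)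
    then show False using mt[OF that \<open>(q v, v) \<in> M\<close>] \<open>q v \<noteq> u\<close> by auto
  qed
  define W where "W = V - H"
  define key where "key x = (if x \<in> H then q x else x)" for x
  define X where "X Z = Z \<union> {v\<in>H. q v \<notin> Z}" for Z
  have finW: "finite W" using finV unfolding W_def by simp
  have keyW: "key x \<in> W" if "x \<in> V" for x
    using that qV qH unfolding key_def W_def by auto
  have memX: "(x \<in> X Z) = ((key x \<in> Z) \<noteq> (x \<in> H))" if "Z \<subseteq> W" for x Z
    using that unfolding X_def key_def W_def by auto
  have XV: "X Z \<subseteq> V" if "Z \<subseteq> W" for Z
    using that qV unfolding X_def W_def by auto
  have keyeq: "(x \<in> H) \<noteq> (y \<in> H)" if "(x, y) \<in> A" "key x = key y" for x y
  proof -
    have "x \<noteq> y" using nl that(1) by blast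
    show ?thesis
    proof (cases "x \<in> H")
      case True
      show ?thesis
      proof
        assume "(x \<in> H) = (y \<in> H)"
        then have yH: "y \<in> H" using True by simp
        have "q x = q y" using that True yH unfolding key_def by simp
        then show False using mt[OF qM[OF True] qM[OF yH]] \<open>x \<noteq> y\<close> by auto
      qed
    next
      case False
      then show ?thesis using that \<open>x \<noteq> y\<close> unfolding key_def by (auto split: if_splits)
    qed
  qed
  define c where "c a = card {Z\<in>Pow W. (key (fst a) \<in> Z) = (fst a \<notin> H) \<and> (key (snd a) \<in> Z) = (snd a \<in> H)}" for a
  define N :: real where "N = 2 ^ card W"
  have cut_eq: "(fst a \<in> X Z \<and> snd a \<in> V - X Z) = ((key (fst a) \<in> Z) = (fst a \<notin> H) \<and> (key (snd a) \<in> Z) = (snd a \<in> H))"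
    if "a \<in> A" "Z \<subseteq> W" for a Z
    using memX[OF that(2)] that AV by auto
  have c_ge: "4 * real (c a) \<ge> N" if "a \<in> A" for a
  proof -
    obtain x y where a: "a = (x, y)" by force
    have "x \<in> V" "y \<in> V" using that a AV by auto
    show ?thesis unfolding c_def N_def a fst_conv snd_conv
      by (rule count_ge(1)[OF finW keyW[OF \<open>x \<in> V\<close>] keyW[OF \<open>y \<in> V\<close>]])
        (use keyeq[of x y] that a in auto)
  qed
  have c_M: "2 * real (c a) = N" if "a \<in> M" for a
  proof -
    obtain x y where a: "a = (x, y)" by force
    have aA: "(x, y) \<in> A" using that a MA by auto
    have "x \<in> V" "y \<in> V" using aA AV by auto
    have k: "key x = key y" using tailnH[of x y] qeq[of x y] that a unfolding key_def H_def by force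
    show ?thesis unfolding c_def N_def a fst_conv snd_conv
      by (rule count_ge(2)[OF finW keyW[OF \<open>x \<in> V\<close>] keyW[OF \<open>y \<in> V\<close>]])
        (use keyeq[OF aA] k in auto)
  qed
  have sumeq: "(\<Sum>Z\<in>Pow W. cut_weight A w (X Z) (V - X Z)) = (\<Sum>a\<in>A. w a * real (c a))"
  proof -
    have "(\<Sum>Z\<in>Pow W. cut_weight A w (X Z) (V - X Z))
        = (\<Sum>Z\<in>Pow W. \<Sum>a\<in>A. if (key (fst a) \<in> Z) = (fst a \<notin> H) \<and> (key (snd a) \<in> Z) = (snd a \<in> H) then w a else 0)"
    proof (rule sum.cong[OF refl])
      fix Z assume "Z \<in> Pow W"
      then have ZW: "Z \<subseteq> W" by simp
      show "cut_weight A w (X Z) (V - X Z) = (\<Sum>a\<in>A. if (key (fst a) \<in> Z) = (fst a \<notin> H) \<and> (key (snd a) \<in> Z) = (snd a \<in> H) then w a else 0)"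
        unfolding cw_sum[OF finA] by (rule sum.cong[OF refl]) (simp only: cut_eq[OF _ ZW])
    qed
    also have "\<dots> = (\<Sum>a\<in>A. \<Sum>Z\<in>Pow W. if (key (fst a) \<in> Z) = (fst a \<notin> H) \<and> (key (snd a) \<in> Z) = (snd a \<in> H) then w a else 0)"
      by (rule sum.swap)
    also have "\<dots> = (\<Sum>a\<in>A. w a * real (c a))"
      by (rule sum.cong[OF refl]) (simp add: sum.inter_filter[symmetric] finW c_def mult.commute)
    finally show ?thesis .
  qed
  have lower: "(\<Sum>a\<in>A. w a * real (c a)) \<ge> N * (wt w A / 4 + wt w M / 4)"
  proof -
    have "(\<Sum>a\<in>A. w a * real (c a)) \<ge> (\<Sum>a\<in>A. w a * N / 4 + (if a \<in> M then w a * N / 4 else 0))"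
    proof (rule sum_mono)
      fix a assume aA: "a \<in> A"
      have w0: "w a \<ge> 0" using wp[OF aA] .
      show "w a * N / 4 + (if a \<in> M then w a * N / 4 else 0) \<le> w a * real (c a)"
      proof (cases "a \<in> M")
        case True
        have ce: "real (c a) = N / 2" using c_M[OF True] by simp
        show ?thesis unfolding ce using True by simp
      next
        case False
        have "w a * N \<le> w a * (4 * real (c a))" by (rule mult_left_mono[OF c_ge[OF aA] w0])
        then show ?thesis using False by simp
      qed
    qed
    also have "(\<Sum>a\<in>A. w a * N / 4 + (if a \<in> M then w a * N / 4 else 0)) = N * (wt w A / 4 + wt w M / 4)"
    proof -
      have "(\<Sum>a\<in>A. (if a \<in> M then w a * N / 4 else 0)) = (\<Sum>a\<in>{a\<in>A. a \<in> M}. w a * N / 4)"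
        by (simp add: sum.inter_filter[OF finA])
      also have "{a\<in>A. a \<in> M} = M" using MA by auto
      finally have e: "(\<Sum>a\<in>A. (if a \<in> M then w a * N / 4 else 0)) = (\<Sum>a\<in>M. w a * N / 4)" .
      show ?thesis unfolding sum.distrib e wt_def
        by (simp add: sum_divide_distrib[symmetric] sum_distrib_left[symmetric] algebra_simps)
    qed
    finally show ?thesis .
  qed
  have upper: "(\<Sum>Z\<in>Pow W. cut_weight A w (X Z) (V - X Z)) \<le> N * mac V A w"
  proof -
    have "(\<Sum>Z\<in>Pow W. cut_weight A w (X Z) (V - X Z)) \<le> (\<Sum>Z\<in>Pow W. mac V A w)"
    proof (rule sum_mono)
      fix Z assume "Z \<in> Pow W"
      then have "X Z \<in> Pow V" using XV by auto
      then show "cut_weight A w (X Z) (V - X Z) \<le> mac V A w"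
        unfolding mac_def using finV by (intro Max_ge) auto
    qed
    also have "\<dots> = N * mac V A w" using finW by (simp add: N_def card_Pow)
    finally show ?thesis .
  qed
  have "N > 0" unfolding N_def by simp
  then show ?thesis using lower upper sumeq
    by (smt (verit) mult_le_cancel_left_pos)
qed

end
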